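(* Let $d<\infty$ and let $V\subset\mathbb{B}_d$ be an analytic disc attached to the unit sphere. Then $V$ is irreducible: for every regular point $\lambda\in V$ and every $\varepsilon>0$, the common zero set in $\mathbb{B}_d$ of all $\varphi\in\mathcal{M}_d$ that vanish on $V\cap B_\varepsilon(\lambda)$ is exactly $V$.
   Context: $\mathbb{D}$ is the open unit disc, $\mathbb{B}_d$ the open unit ball of $\mathbb{C}^d$, $B_\varepsilon(\lambda)$ the open ball of radius $\varepsilon$ about $\lambda$. The Drury–Arveson space $H^2_d$ is the RKHS on $\mathbb{B}_d$ with kernel $1/(1-\langle z,w\rangle)$, with multiplier algebra $\mathcal{M}_d$. A variety is a common zero set in $\mathbb{B}_d$ of a family of functions from $\mathcal{M}_d$. An analytic disc attached to the unit sphere is a variety $V\subset\mathbb{B}_d$ ($d<\infty$) for which there is an injective analytic $f:\mathbb{D}\to\mathbb{B}_d$ with $f'(z)\neq0$ on $\mathbb{D}$, $V=f(\mathbb{D})$, $f$ extends to a $C^2$ map on $\overline{\mathbb{D}}$, and for $x\in\overline{\mathbb{D}}$, $\|f(x)\|=1$ iff $|x|=1$. *)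

theory Defs
  imports "HOL-Analysis.Analysis"
begin

text \<open>Points of C^d are vectors of type complex^'n ('n a finite type, d = CARD('n)).
  The norm on complex^'n is the Euclidean norm, so ball 0 1 is the open unit ball B_d.\<close>

definition cinner :: "complex^'n \<Rightarrow> complex^'n \<Rightarrow> complex" where
  "cinner z w = (\<Sum>i\<in>UNIV. z $ i * cnj (w $ i))"

definition DA_kernel :: "complex^'n \<Rightarrow> complex^'n \<Rightarrow> complex" where
  "DA_kernel z w = 1 / (1 - cinner z w)"

definition pos_kernel :: "'a set \<Rightarrow> ('a \<Rightarrow> 'a \<Rightarrow> complex) \<Rightarrow> bool" where
  "pos_kernel S L \<longleftrightarrow>
     (\<forall>(n::nat) (x::nat \<Rightarrow> 'a) (a::nat \<Rightarrow> complex). (\<forall>i<n. x i \<in> S) \<longrightarrow>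
        (let s = (\<Sum>i<n. \<Sum>j<n. a i * cnj (a j) * L (x i) (x j)) in Im s = 0 \<and> Re s \<ge> 0))"

text \<open>Drury--Arveson space: the reproducing kernel Hilbert space of DA_kernel on the ball,
  given by its membership criterion (Aronszajn): f \<in> H(K) iff c K - f \<otimes> f^* is a
  positive kernel for some constant c.\<close>
definition DA_space :: "(complex^'n \<Rightarrow> complex) set" where
  "DA_space = {f. \<exists>c::real. pos_kernel (ball 0 1)
        (\<lambda>z w. of_real c * DA_kernel z w - f z * cnj (f w))}"

definition DA_mult :: "(complex^'n \<Rightarrow> complex) set" where
  "DA_mult = {\<phi>. \<forall>f\<in>DA_space. (\<lambda>z. \<phi> z * f z) \<in> DA_space}"

definition zero_set :: "(complex^'n \<Rightarrow> complex) set \<Rightarrow> (complex^'n) set" where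
  "zero_set F = {z \<in> ball 0 1. \<forall>\<phi>\<in>F. \<phi> z = 0}"

definition variety :: "(complex^'n) set \<Rightarrow> bool" where
  "variety V \<longleftrightarrow> (\<exists>F \<subseteq> DA_mult. V = zero_set F)"

definition cholo_on :: "(complex^'n) set \<Rightarrow> (complex^'n \<Rightarrow> complex^'m) \<Rightarrow> bool" where
  "cholo_on U \<Phi> \<longleftrightarrow> (\<forall>z\<in>U. \<exists>D. (\<Phi> has_derivative D) (at z) \<and>
                        (\<forall>c v. D (c *s v) = c *s D v))"

definition biholo_on :: "(complex^'n) set \<Rightarrow> (complex^'n \<Rightarrow> complex^'n) \<Rightarrow> bool" where
  "biholo_on U \<Phi> \<longleftrightarrow> open U \<and> inj_on \<Phi> U \<and> open (\<Phi> ` U) \<and> cholo_on U \<Phi> \<and>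
                      cholo_on (\<Phi> ` U) (inv_into U \<Phi>)"

text \<open>Regular point of V: near \<lambda>, V is a complex submanifold (given by a holomorphic
  slice chart).\<close>
definition regular_point :: "(complex^'n) set \<Rightarrow> complex^'n \<Rightarrow> bool" where
  "regular_point V p \<longleftrightarrow> p \<in> V \<and>
     (\<exists>U \<Phi> (S::'n set). p \<in> U \<and> biholo_on U \<Phi> \<and>
        \<Phi> ` (V \<inter> U) = \<Phi> ` U \<inter> {z. \<forall>i. i \<notin> S \<longrightarrow> z $ i = 0})"

definition C2_on_cdisc :: "(complex \<Rightarrow> complex^'n) \<Rightarrow> bool" where
  "C2_on_cdisc F \<longleftrightarrow>
     (\<exists>(DF :: complex \<Rightarrow> complex \<Rightarrow>\<^sub>L (complex^'n))
        (DDF :: complex \<Rightarrow> complex \<Rightarrow>\<^sub>L (complex \<Rightarrow>\<^sub>L (complex^'n))).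
        (\<forall>x\<in>cball 0 1. (F has_derivative blinfun_apply (DF x)) (at x within cball 0 1) \<and>
                         (DF has_derivative blinfun_apply (DDF x)) (at x within cball 0 1)) \<and>
        continuous_on (cball 0 1) DDF)"

definition analytic_disc_attached :: "(complex^'n) set \<Rightarrow> bool" where
  "analytic_disc_attached V \<longleftrightarrow> variety V \<and>
     (\<exists>f :: complex \<Rightarrow> complex^'n.
        f ` ball 0 1 \<subseteq> ball 0 1 \<and>
        (\<forall>i. (\<lambda>z. f z $ i) holomorphic_on ball 0 1) \<and>
        inj_on f (ball 0 1) \<and>
        (\<forall>z\<in>ball 0 1. \<exists>i. deriv (\<lambda>w. f w $ i) z \<noteq> 0) \<and>
        V = f ` ball 0 1 \<and>
        (\<exists>F. (\<forall>z\<in>ball 0 1. F z = f z) \<and> C2_on_cdisc F \<and>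
             (\<forall>x\<in>cball 0 1. norm (F x) = 1 \<longleftrightarrow> norm x = 1)))"

end

theory Submission
  imports Defs "HOL-Complex_Analysis.Complex_Analysis"
begin

no_notation fps_nth (infixl "$" 75)



lemma cinner_pow_psd:
  fixes x :: "nat \<Rightarrow> complex^'n"
  shows "Im (\<Sum>i<m. \<Sum>j<m. a i * cnj (a j) * cinner (x i) (x j) ^ n) = 0 \<and>
         0 \<le> Re (\<Sum>i<m. \<Sum>j<m. a i * cnj (a j) * cinner (x i) (x j) ^ n)"
proof (induction n arbitrary: a)
  case 0
  have "(\<Sum>i<m. \<Sum>j<m. a i * cnj (a j) * cinner (x i) (x j) ^ 0) = (\<Sum>i<m. a i) * cnj (\<Sum>j<m. a j)"
    by (simp add: sum_distrib_left sum_distrib_right) (rule sum.swap)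
  also have "\<dots> = of_real ((Re (\<Sum>i<m. a i))\<^sup>2 + (Im (\<Sum>i<m. a i))\<^sup>2)"
    by (rule complex_mult_cnj)
  finally show ?case by (simp only:) simp
next
  case (Suc n)
  have e1: "cinner (x i) (x j) ^ Suc n = (\<Sum>k\<in>UNIV. x i $ k * cnj (x j $ k)) * cinner (x i) (x j) ^ n" for i j
    by (simp add: cinner_def)
  have "(\<Sum>i<m. \<Sum>j<m. a i * cnj (a j) * cinner (x i) (x j) ^ Suc n)
      = (\<Sum>i<m. \<Sum>j<m. \<Sum>k\<in>UNIV. (a i * x i $ k) * cnj (a j * x j $ k) * cinner (x i) (x j) ^ n)"
    unfolding e1 by (simp add: sum_distrib_left sum_distrib_right mult_ac)
  also have "\<dots> = (\<Sum>i<m. \<Sum>k\<in>UNIV. \<Sum>j<m. (a i * x i $ k) * cnj (a j * x j $ k) * cinner (x i) (x j) ^ n)"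
    by (rule sum.cong[OF refl], rule sum.swap)
  also have "\<dots> = (\<Sum>k\<in>UNIV. \<Sum>i<m. \<Sum>j<m. (a i * x i $ k) * cnj (a j * x j $ k) * cinner (x i) (x j) ^ n)"
    by (rule sum.swap)
  finally have eq: "(\<Sum>i<m. \<Sum>j<m. a i * cnj (a j) * cinner (x i) (x j) ^ Suc n) = \<dots>" .
  show ?case unfolding eq Im_sum Re_sum
    using Suc.IH[of "\<lambda>i. a i * x i $ k" for k] by (simp add: sum_nonneg)
qed

lemma cinner_self: "cinner x x = of_real (norm x ^ 2)"
proof -
  have "cinner x x = (\<Sum>i\<in>UNIV. of_real (norm (x $ i) ^ 2))"
    unfolding cinner_def by (simp add: complex_mult_cnj cmod_def)
  also have "\<dots> = of_real (norm x ^ 2)"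
    unfolding norm_vec_def L2_set_def by (simp add: sum_nonneg)
  finally show ?thesis .
qed

lemma cinner_bound: "norm (cinner x y) \<le> norm x * norm y"
proof -
  have "norm (cinner x y) \<le> (\<Sum>i\<in>UNIV. norm (x $ i) * norm (y $ i))"
    unfolding cinner_def by (rule order_trans[OF norm_sum]) (simp add: norm_mult)
  also have "\<dots> \<le> L2_set (\<lambda>i. norm (x $ i)) UNIV * L2_set (\<lambda>i. norm (y $ i)) UNIV"
    using L2_set_mult_ineq[of "\<lambda>i. norm (x $ i)" "\<lambda>i. norm (y $ i)" UNIV] by simp
  finally show ?thesis by (simp add: norm_vec_def)
qed

lemma one_DA: "(\<lambda>z. 1) \<in> DA_space"
  unfolding DA_space_def pos_kernel_def
proof (intro CollectI exI[of _ 1] allI impI)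
  fix m :: nat and x :: "nat \<Rightarrow> complex^'n" and a :: "nat \<Rightarrow> complex"
  assume x: "\<forall>i<m. x i \<in> ball 0 1"
  define S where "S n = (\<Sum>i<m. \<Sum>j<m. a i * cnj (a j) * cinner (x i) (x j) ^ n)" for n
  have w: "norm (cinner (x i) (x j)) < 1" if "i < m" "j < m" for i j
  proof -
    have "norm (x i) < 1" "norm (x j) < 1" using x that by auto
    then have "norm (x i) * norm (x j) \<le> norm (x i)"
      by (simp add: mult_left_le)
    then have "norm (x i) * norm (x j) < 1" using \<open>norm (x i) < 1\<close> by linarith
    then show ?thesis using cinner_bound[of "x i" "x j"] by linarith
  qed
  have ser: "(\<lambda>n. a i * cnj (a j) * cinner (x i) (x j) ^ Suc n) sums
     (a i * cnj (a j) * (complex_of_real 1 * DA_kernel (x i) (x j) - 1 * cnj 1))"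
    if "i < m" "j < m" for i j
  proof -
    let ?w = "cinner (x i) (x j)"
    have "(\<lambda>n. ?w ^ n) sums (1 / (1 - ?w))" using geometric_sums[OF w[OF that]] by simp
    then have "(\<lambda>n. ?w ^ Suc n) sums (1 / (1 - ?w) - 1)"
      using sums_Suc_iff[of "\<lambda>n. ?w ^ n" "1 / (1 - ?w) - 1"] by simp
    from sums_mult[OF this, of "a i * cnj (a j)"] show ?thesis
      by (simp add: DA_kernel_def)
  qed
  have "(\<lambda>n. S (Suc n)) sums
     (\<Sum>i<m. \<Sum>j<m. a i * cnj (a j) * (complex_of_real 1 * DA_kernel (x i) (x j) - 1 * cnj 1))"
    unfolding S_def by (intro sums_sum) (use ser in auto)
  then have hs: "(\<lambda>n. S (Suc n)) sums
     (\<Sum>i<m. \<Sum>j<m. a i * cnj (a j) * (complex_of_real 1 * DA_kernel (x i) (x j) - 1 * cnj 1))" .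
  have pos: "Im (S n) = 0 \<and> 0 \<le> Re (S n)" for n unfolding S_def by (rule cinner_pow_psd)
  have "(\<lambda>n. Im (S (Suc n))) sums 0" using pos by simp
  with sums_Im[OF hs] have i0: "Im (\<Sum>i<m. \<Sum>j<m. a i * cnj (a j) * (complex_of_real 1 * DA_kernel (x i) (x j) - 1 * cnj 1)) = 0"
    using sums_unique2 by blast
  have r0: "0 \<le> Re (\<Sum>i<m. \<Sum>j<m. a i * cnj (a j) * (complex_of_real 1 * DA_kernel (x i) (x j) - 1 * cnj 1))"
    using sums_le[OF _ sums_zero sums_Re[OF hs]] pos by simp
  show "let s = \<Sum>i<m. \<Sum>j<m. a i * cnj (a j) * (complex_of_real 1 * DA_kernel (x i) (x j) - 1 * cnj 1)
           in Im s = 0 \<and> 0 \<le> Re s"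
    using i0 r0 by (simp add: Let_def)
qed

lemma mult_DA_space: assumes "\<phi> \<in> DA_mult" shows "\<phi> \<in> DA_space"
proof -
  have "\<forall>f\<in>DA_space. (\<lambda>z. \<phi> z * f z) \<in> DA_space" using assms by (simp add: DA_mult_def)
  from bspec[OF this one_DA] show ?thesis by simp
qed



lemma DA_ineq:
  assumes "\<phi> \<in> DA_space"
  obtains c :: real where "\<And>m (x :: nat \<Rightarrow> complex^'n) a. (\<forall>i<m. x i \<in> ball 0 1) \<Longrightarrow>
     (cmod (\<Sum>i<m. a i * \<phi> (x i)))\<^sup>2 \<le> c * Re (\<Sum>i<m. \<Sum>j<m. a i * cnj (a j) * DA_kernel (x i) (x j))"
proof -
  obtain c :: real where pk: "pos_kernel (ball 0 1) (\<lambda>z w. of_real c * DA_kernel z w - \<phi> z * cnj (\<phi> w))"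
    using assms unfolding DA_space_def by blast
  have "(cmod (\<Sum>i<m. a i * \<phi> (x i)))\<^sup>2 \<le> c * Re (\<Sum>i<m. \<Sum>j<m. a i * cnj (a j) * DA_kernel (x i) (x j))"
    if x: "\<forall>i<m. x i \<in> ball 0 1" for m and x :: "nat \<Rightarrow> complex^'n" and a
  proof -
    let ?S = "\<Sum>i<m. a i * \<phi> (x i)"
    let ?Q = "\<Sum>i<m. \<Sum>j<m. a i * cnj (a j) * DA_kernel (x i) (x j)"
    have e: "(\<Sum>i<m. \<Sum>j<m. a i * cnj (a j) * (of_real c * DA_kernel (x i) (x j) - \<phi> (x i) * cnj (\<phi> (x j))))
       = of_real c * ?Q - ?S * cnj ?S"
    proof -
      have e2: "?S * cnj ?S = (\<Sum>i<m. \<Sum>j<m. a i * cnj (a j) * (\<phi> (x i) * cnj (\<phi> (x j))))"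
        by (simp only: cnj_sum sum_product) (simp add: mult_ac)
      show ?thesis unfolding e2
        by (simp add: right_diff_distrib sum_subtractf sum_distrib_left mult_ac)
    qed
    have "0 \<le> Re (of_real c * ?Q - ?S * cnj ?S)"
      using pk x unfolding pos_kernel_def e[symmetric] by (auto simp: Let_def)
    moreover have "Re (?S * cnj ?S) = (cmod ?S)\<^sup>2"
      by (simp only: complex_mult_cnj cmod_power2) simp
    ultimately show ?thesis by simp
  qed
  then show ?thesis using that by blast
qed

lemma alg2:
  fixes P R S2 T h D :: complex
  assumes "P \<noteq> 0" "R \<noteq> 0" "h \<noteq> 0"
  shows "((S2 + h*T)/P - S2/R) / h = T/P + S2 * ((R - P) / h) / (P*R)"
  using assms by (simp add: field_simps)

lemma alg:
  fixes X Y Z W S1 S2 T U1 U2 h k :: complex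
  assumes "X - Y = k * S1" "Z - W = k * S2" "S1 - S2 = h * T" "X - Z = h * U1" "Y - W = h * U2"
    "h \<noteq> 0" "k \<noteq> 0" "X \<noteq> 1" "Y \<noteq> 1" "Z \<noteq> 1" "W \<noteq> 1"
  shows "(1/(1-X) - 1/(1-Y) - 1/(1-Z) + 1/(1-W)) / (h*k)
     = T/((1-X)*(1-Y)) + S2*(U1*(1-Y) + U2*(1-Z))/((1-X)*(1-Y)*(1-Z)*(1-W))"
proof -
  have nz: "1 - X \<noteq> 0" "1 - Y \<noteq> 0" "1 - Z \<noteq> 0" "1 - W \<noteq> 0" using assms by auto
  have a1: "1/(1-X) - 1/(1-Y) = (X - Y)/((1-X)*(1-Y))" using nz by (simp add: field_simps)
  have a2: "1/(1-Z) - 1/(1-W) = (Z - W)/((1-Z)*(1-W))" using nz by (simp add: field_simps)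
  have a3: "(1-Z)*(1-W) - (1-X)*(1-Y) = h * (U1*(1-Y) + U2*(1-Z))"
  proof -
    have "(1-Z)*(1-W) - (1-X)*(1-Y) = (X - Z)*(1-Y) + (Y - W)*(1-Z)" by (simp add: algebra_simps)
    then show ?thesis using assms(4,5) by (simp add: algebra_simps)
  qed
  have "1/(1-X) - 1/(1-Y) - 1/(1-Z) + 1/(1-W) = (1/(1-X) - 1/(1-Y)) - (1/(1-Z) - 1/(1-W))"
    by (simp add: algebra_simps)
  also have "\<dots> = k * (S1/((1-X)*(1-Y)) - S2/((1-Z)*(1-W)))"
    unfolding a1 a2 assms(1,2) by (simp add: right_diff_distrib)
  finally have "(1/(1-X) - 1/(1-Y) - 1/(1-Z) + 1/(1-W)) / (h*k)
      = k * (S1/((1-X)*(1-Y)) - S2/((1-Z)*(1-W))) / (h * k)" by simp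
  also have "\<dots> = (S1/((1-X)*(1-Y)) - S2/((1-Z)*(1-W))) / h"
    using assms(7) by simp
  also have "\<dots> = ((S2 + h*T)/((1-X)*(1-Y)) - S2/((1-Z)*(1-W))) / h"
    using assms(3) by (simp add: algebra_simps)
  also have "\<dots> = T/((1-X)*(1-Y)) + S2 * (((1-Z)*(1-W) - (1-X)*(1-Y)) / h) /((1-X)*(1-Y)*(1-Z)*(1-W))"
    using alg2[of "(1-X)*(1-Y)" "(1-Z)*(1-W)" h S2 T] nz assms(6) by (simp add: mult.assoc)
  also have "\<dots> = T/((1-X)*(1-Y)) + S2*(U1*(1-Y) + U2*(1-Z))/((1-X)*(1-Y)*(1-Z)*(1-W))"
    unfolding a3 using assms(6) by simp
  finally show ?thesis .
qed

lemma cauchy_at0: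
  fixes D :: "complex \<Rightarrow> complex"
  assumes C: "\<forall>e>0. \<exists>\<delta>>0. \<forall>h h'. h \<noteq> 0 \<longrightarrow> h' \<noteq> 0 \<longrightarrow> cmod h < \<delta> \<longrightarrow> cmod h' < \<delta> \<longrightarrow> cmod (D h - D h') < e"
  shows "\<exists>l. (D \<longlongrightarrow> l) (at 0)"
proof -
  define s where "s n = complex_of_real (1 / real (Suc n))" for n
  have s0: "s n \<noteq> 0" for n
  proof -
    have "1 / real (Suc n) \<noteq> 0" by simp
    then show ?thesis unfolding s_def by (metis of_real_eq_0_iff)
  qed
  have sm: "cmod (s n) \<le> 1 / real (Suc M)" if "M \<le> n" for n M
  proof -
    have "cmod (s n) = 1 / real (Suc n)" unfolding s_def norm_of_real by (rule abs_of_nonneg) simp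
    also have "\<dots> \<le> 1 / real (Suc M)" by (rule divide_left_mono) (use that in auto)
    finally show ?thesis .
  qed
  have small: "\<exists>M. 1 / real (Suc M) < \<delta>" if "\<delta> > 0" for \<delta> :: real
  proof -
    obtain M where "1 / \<delta> < real M" using reals_Archimedean2 by blast
    then have "1 / real (Suc M) < \<delta>" using that
      by (smt (verit) divide_less_eq of_nat_Suc of_nat_0_le_iff divide_pos_pos mult.commute)
    then show ?thesis by blast
  qed
  have "Cauchy (\<lambda>n. D (s n))"
  proof (rule CauchyI)
    fix e :: real assume "e > 0"
    then obtain \<delta> where d: "\<delta> > 0" "\<forall>h h'. h \<noteq> 0 \<longrightarrow> h' \<noteq> 0 \<longrightarrow> cmod h < \<delta> \<longrightarrow> cmod h' < \<delta> \<longrightarrow> cmod (D h - D h') < e"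
      using C by blast
    obtain M where M: "1 / real (Suc M) < \<delta>" using small[OF d(1)] by blast
    show "\<exists>M. \<forall>m\<ge>M. \<forall>n\<ge>M. cmod (D (s m) - D (s n)) < e"
    proof (intro exI allI impI)
      fix m n assume "M \<le> m" "M \<le> n"
      then have "cmod (s m) < \<delta>" "cmod (s n) < \<delta>" using sm M by (meson order_le_less_trans)+
      then show "cmod (D (s m) - D (s n)) < e" using d(2) s0 by blast
    qed
  qed
  then obtain l where l: "(\<lambda>n. D (s n)) \<longlonglongrightarrow> l" using Cauchy_convergent_iff convergent_def by blast
  have "(D \<longlongrightarrow> l) (at 0)"
    unfolding LIM_eq
  proof (intro allI impI)
    fix r :: real assume "r > 0"
    then obtain \<delta> where d: "\<delta> > 0" "\<forall>h h'. h \<noteq> 0 \<longrightarrow> h' \<noteq> 0 \<longrightarrow> cmod h < \<delta> \<longrightarrow> cmod h' < \<delta> \<longrightarrow> cmod (D h - D h') < r/2"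
      using C[rule_format, of "r/2"] by auto
    obtain M where M: "1 / real (Suc M) < \<delta>" using small[OF d(1)] by blast
    obtain N where N: "\<forall>n\<ge>N. cmod (D (s n) - l) < r/2" using l \<open>r > 0\<close> unfolding LIMSEQ_iff
      by (meson half_gt_zero)
    define n where "n = max M N"
    have sn: "cmod (s n) < \<delta>" using sm[of M n] M by (simp add: n_def)
    have Dn: "cmod (D (s n) - l) < r/2" using N by (simp add: n_def)
    show "\<exists>s>0. \<forall>x. x \<noteq> 0 \<and> cmod (x - 0) < s \<longrightarrow> cmod (D x - l) < r"
    proof (intro exI[of _ \<delta>] conjI allI impI)
      fix x :: complex assume x: "x \<noteq> 0 \<and> cmod (x - 0) < \<delta>"
      then have "cmod (D x - D (s n)) < r/2" using d(2) sn s0 by auto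
      then show "cmod (D x - l) < r" using Dn norm_triangle_ineq[of "D x - D (s n)" "D (s n) - l"] by simp
    qed (use d in auto)
  qed
  then show ?thesis by blast
qed



lemma cinner_lt1:
  assumes "x \<in> ball 0 1" "y \<in> ball 0 1"
  shows "cmod (cinner x y) < 1"
proof -
  have "norm x < 1" "norm y < 1" using assms by auto
  then have "norm x * norm y \<le> norm x" by (simp add: mult_left_le)
  then have "norm x * norm y < 1" using \<open>norm x < 1\<close> by linarith
  then show ?thesis using cinner_bound[of x y] by linarith
qed

lemma quad_expand:
  fixes z h h' :: complex and L :: "complex \<Rightarrow> complex \<Rightarrow> complex"
  assumes "h \<noteq> 0" "h' \<noteq> 0"
  defines "a \<equiv> (\<lambda>i::nat. if i = 0 then 1/h else if i = 1 then -1/h else if i = 2 then -1/h' else 1/h')"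
  defines "p \<equiv> (\<lambda>i::nat. if i = 0 then z+h else if i = 1 then z else if i = 2 then z+h' else z)"
  defines "A \<equiv> (\<lambda>h k. (L (z+h) (z+k) - L (z+h) z - L z (z+k) + L z z) / (h * cnj k))"
  shows "(\<Sum>i<4. \<Sum>j<4. a i * cnj (a j) * L (p i) (p j)) = A h h - A h h' - A h' h + A h' h'"
proof -
  have u: "{..<4::nat} = {0,1,2,3}" by auto
  show ?thesis unfolding u A_def a_def p_def
    by (simp add: divide_inverse algebra_simps)
qed

lemma lin_expand:
  fixes z h h' :: complex and g :: "complex \<Rightarrow> complex"
  assumes "h \<noteq> 0" "h' \<noteq> 0"
  defines "a \<equiv> (\<lambda>i::nat. if i = 0 then 1/h else if i = 1 then -1/h else if i = 2 then -1/h' else 1/h')"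
  defines "p \<equiv> (\<lambda>i::nat. if i = 0 then z+h else if i = 1 then z else if i = 2 then z+h' else z)"
  shows "(\<Sum>i<4. a i * g (p i)) = (g (z+h) - g z)/h - (g (z+h') - g z)/h'"
proof -
  have u: "{..<4::nat} = {0,1,2,3}" by auto
  show ?thesis unfolding u a_def p_def
    by (simp add: divide_inverse algebra_simps)
qed



lemma A_limit:
  fixes f :: "complex \<Rightarrow> complex^'n"
  assumes hol: "\<forall>i. (\<lambda>z. f z $ i) holomorphic_on ball 0 1" and into: "f ` ball 0 1 \<subseteq> ball 0 1"
    and z: "z \<in> ball 0 1" and r: "r > 0" "\<And>h. cmod h < r \<Longrightarrow> z + h \<in> ball 0 1"
  defines "A \<equiv> (\<lambda>h k. (DA_kernel (f (z+h)) (f (z+k)) - DA_kernel (f (z+h)) (f z)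
                    - DA_kernel (f z) (f (z+k)) + DA_kernel (f z) (f z)) / (h * cnj k))"
  shows "\<exists>A0. \<forall>e>0. \<exists>\<delta>>0. \<forall>h k. h \<noteq> 0 \<longrightarrow> k \<noteq> 0 \<longrightarrow> cmod h < \<delta> \<longrightarrow> cmod k < \<delta> \<longrightarrow> cmod (A h k - A0) < e"
proof -
  have "\<forall>i. \<exists>d. DERIV (\<lambda>s. f s $ i) z :> d"
    using hol z holomorphic_on_open[of "ball 0 1"] by auto
  then obtain fd where fd: "\<And>i. DERIV (\<lambda>s. f s $ i) z :> fd i" by metis
  let ?F = "at (0::complex) \<times>\<^sub>F at (0::complex)"
  have la: "((\<lambda>h. f (z+h) $ i) \<longlongrightarrow> f z $ i) (at 0)" for i
    using DERIV_isCont[OF fd[of i]] unfolding isCont_iff by simp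
  have lda: "((\<lambda>h. (f (z+h) $ i - f z $ i) / h) \<longlongrightarrow> fd i) (at 0)" for i
    using fd[of i] unfolding DERIV_def by simp
  have lf: "((\<lambda>p. P (fst p)) \<longlongrightarrow> l) ?F" if "(P \<longlongrightarrow> l) (at 0)" for P :: "complex \<Rightarrow> complex" and l
    using filterlim_compose[OF that filterlim_fst] .
  have ls: "((\<lambda>p. P (snd p)) \<longlongrightarrow> l) ?F" if "(P \<longlongrightarrow> l) (at 0)" for P :: "complex \<Rightarrow> complex" and l
    using filterlim_compose[OF that filterlim_snd] .
  define aa where "aa i (p::complex\<times>complex) = f (z + fst p) $ i" for i p
  define bb where "bb i (p::complex\<times>complex) = cnj (f (z + snd p) $ i)" for i p
  define da where "da i (p::complex\<times>complex) = (f (z + fst p) $ i - f z $ i) / fst p" for i p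
  define db where "db i (p::complex\<times>complex) = cnj ((f (z + snd p) $ i - f z $ i) / snd p)" for i p
  define a0 where "a0 i = f z $ i" for i
  define b0 where "b0 i = cnj (f z $ i)" for i
  have laa: "((\<lambda>p. aa i p) \<longlongrightarrow> a0 i) ?F" for i unfolding aa_def a0_def by (rule lf[OF la])
  have lbb: "((\<lambda>p. bb i p) \<longlongrightarrow> b0 i) ?F" for i unfolding bb_def b0_def by (rule tendsto_cnj, rule ls[OF la])
  have lda': "((\<lambda>p. da i p) \<longlongrightarrow> fd i) ?F" for i unfolding da_def by (rule lf[OF lda])
  have ldb': "((\<lambda>p. db i p) \<longlongrightarrow> cnj (fd i)) ?F" for i unfolding db_def by (rule tendsto_cnj, rule ls[OF lda])
  define X where "X p = (\<Sum>i\<in>UNIV. aa i p * bb i p)" for p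
  define Y where "Y p = (\<Sum>i\<in>UNIV. aa i p * b0 i)" for p
  define Z where "Z p = (\<Sum>i\<in>UNIV. a0 i * bb i p)" for p
  define W where "W = (\<Sum>i\<in>UNIV. a0 i * b0 i)"
  define T where "T p = (\<Sum>i\<in>UNIV. da i p * db i p)" for p
  define S1 where "S1 p = (\<Sum>i\<in>UNIV. aa i p * db i p)" for p
  define S2 where "S2 p = (\<Sum>i\<in>UNIV. a0 i * db i p)" for p
  define U1 where "U1 p = (\<Sum>i\<in>UNIV. da i p * bb i p)" for p
  define U2 where "U2 p = (\<Sum>i\<in>UNIV. da i p * b0 i)" for p
  define T0 where "T0 = (\<Sum>i\<in>UNIV. fd i * cnj (fd i))"
  define S0 where "S0 = (\<Sum>i\<in>UNIV. a0 i * cnj (fd i))"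
  define U0 where "U0 = (\<Sum>i\<in>UNIV. fd i * b0 i)"
  have lX: "(X \<longlongrightarrow> W) ?F" unfolding X_def W_def by (intro tendsto_intros laa lbb)
  have lY: "(Y \<longlongrightarrow> W) ?F" unfolding Y_def W_def by (intro tendsto_intros laa lbb)
  have lZ: "(Z \<longlongrightarrow> W) ?F" unfolding Z_def W_def by (intro tendsto_intros laa lbb)
  have lT: "(T \<longlongrightarrow> T0) ?F" unfolding T_def T0_def by (intro tendsto_intros lda' ldb')
  have lS2: "(S2 \<longlongrightarrow> S0) ?F" unfolding S2_def S0_def by (intro tendsto_intros ldb')
  have lU1: "(U1 \<longlongrightarrow> U0) ?F" unfolding U1_def U0_def by (intro tendsto_intros lda' lbb)
  have lU2: "(U2 \<longlongrightarrow> U0) ?F" unfolding U2_def U0_def by (intro tendsto_intros lda')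
  have fz: "f z \<in> ball 0 1" using into z by blast
  have W1: "1 - W \<noteq> 0"
  proof -
    have "W = cinner (f z) (f z)" unfolding W_def cinner_def a0_def b0_def ..
    then show ?thesis using cinner_lt1[OF fz fz] by auto
  qed
  define A0 where "A0 = T0/((1-W)*(1-W)) + S0*(U0*(1-W) + U0*(1-W))/((1-W)*(1-W)*(1-W)*(1-W))"
  have lE: "((\<lambda>p. T p/((1-X p)*(1-Y p)) + S2 p*(U1 p*(1-Y p) + U2 p*(1-Z p))/((1-X p)*(1-Y p)*(1-Z p)*(1-W)))
      \<longlongrightarrow> A0) ?F"
    unfolding A0_def using W1
    by (intro tendsto_intros lX lY lZ lT lS2 lU1 lU2) auto
  have ev: "eventually (\<lambda>p. T p/((1-X p)*(1-Y p)) + S2 p*(U1 p*(1-Y p) + U2 p*(1-Z p))/((1-X p)*(1-Y p)*(1-Z p)*(1-W))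
      = A (fst p) (snd p)) ?F"
    unfolding eventually_prod_filter
  proof (intro exI conjI allI impI)
    show "eventually (\<lambda>h. h \<noteq> 0 \<and> cmod h < r) (at 0)"
      unfolding eventually_at using r(1) by (auto simp: dist_norm)
    show "eventually (\<lambda>h. h \<noteq> 0 \<and> cmod h < r) (at 0)"
      unfolding eventually_at using r(1) by (auto simp: dist_norm)
    fix h k :: complex
    assume h: "h \<noteq> 0 \<and> cmod h < r" and k: "k \<noteq> 0 \<and> cmod k < r"
    let ?p = "(h, k)"
    have "z+h \<in> ball 0 1" "z+k \<in> ball 0 1" using r(2) h k by auto
    then have fh: "f (z+h) \<in> ball 0 1" and fk: "f (z+k) \<in> ball 0 1" using into by blast+
    have cX: "X ?p = cinner (f (z+h)) (f (z+k))" unfolding X_def cinner_def aa_def bb_def by simp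
    have cY: "Y ?p = cinner (f (z+h)) (f z)" unfolding Y_def cinner_def aa_def b0_def by simp
    have cZ: "Z ?p = cinner (f z) (f (z+k))" unfolding Z_def cinner_def a0_def bb_def by simp
    have cW: "W = cinner (f z) (f z)" unfolding W_def cinner_def a0_def b0_def ..
    have X1: "X ?p \<noteq> 1" using cinner_lt1[OF fh fk] cX by auto
    have Y1: "Y ?p \<noteq> 1" using cinner_lt1[OF fh fz] cY by auto
    have Z1: "Z ?p \<noteq> 1" using cinner_lt1[OF fz fk] cZ by auto
    have W1': "W \<noteq> 1" using W1 by auto
    have kb: "bb i ?p - b0 i = cnj k * db i ?p" for i
      unfolding bb_def b0_def db_def using k by (simp add: complex_cnj_divide)
    have ha: "aa i ?p - a0 i = h * da i ?p" for i
      unfolding aa_def a0_def da_def using h by simp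
    have e1: "X ?p - Y ?p = cnj k * S1 ?p"
    proof -
      have "aa i ?p * bb i ?p - aa i ?p * b0 i = cnj k * (aa i ?p * db i ?p)" for i
        using kb[of i] by (metis right_diff_distrib mult.left_commute)
      then show ?thesis unfolding X_def Y_def S1_def sum_subtractf[symmetric] sum_distrib_left by simp
    qed
    have e2: "Z ?p - W = cnj k * S2 ?p"
    proof -
      have "a0 i * bb i ?p - a0 i * b0 i = cnj k * (a0 i * db i ?p)" for i
        using kb[of i] by (metis right_diff_distrib mult.left_commute)
      then show ?thesis unfolding Z_def W_def S2_def sum_subtractf[symmetric] sum_distrib_left by simp
    qed
    have e3: "S1 ?p - S2 ?p = h * T ?p"
    proof -
      have "aa i ?p * db i ?p - a0 i * db i ?p = h * (da i ?p * db i ?p)" for i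
        using ha[of i] by (metis left_diff_distrib mult.assoc)
      then show ?thesis unfolding S1_def S2_def T_def sum_subtractf[symmetric] sum_distrib_left by simp
    qed
    have e4: "X ?p - Z ?p = h * U1 ?p"
    proof -
      have "aa i ?p * bb i ?p - a0 i * bb i ?p = h * (da i ?p * bb i ?p)" for i
        using ha[of i] by (metis left_diff_distrib mult.assoc)
      then show ?thesis unfolding X_def Z_def U1_def sum_subtractf[symmetric] sum_distrib_left by simp
    qed
    have e5: "Y ?p - W = h * U2 ?p"
    proof -
      have "aa i ?p * b0 i - a0 i * b0 i = h * (da i ?p * b0 i)" for i
        using ha[of i] by (metis left_diff_distrib mult.assoc)
      then show ?thesis unfolding Y_def W_def U2_def sum_subtractf[symmetric] sum_distrib_left by simp
    qed
    have ck: "cnj k \<noteq> 0" using k by simp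
    have "A h k = (1/(1-X ?p) - 1/(1-Y ?p) - 1/(1-Z ?p) + 1/(1-W)) / (h * cnj k)"
      unfolding A_def DA_kernel_def cX cY cZ cW ..
    also have "\<dots> = T ?p/((1-X ?p)*(1-Y ?p)) + S2 ?p*(U1 ?p*(1-Y ?p) + U2 ?p*(1-Z ?p))/((1-X ?p)*(1-Y ?p)*(1-Z ?p)*(1-W))"
      by (rule alg[OF e1 e2 e3 e4 e5]) (use h ck X1 Y1 Z1 W1' in auto)
    finally show "T ?p/((1-X ?p)*(1-Y ?p)) + S2 ?p*(U1 ?p*(1-Y ?p) + U2 ?p*(1-Z ?p))/((1-X ?p)*(1-Y ?p)*(1-Z ?p)*(1-W))
      = A (fst ?p) (snd ?p)" by simp
  qed
  have lA: "((\<lambda>p. A (fst p) (snd p)) \<longlongrightarrow> A0) ?F"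
    by (rule Lim_transform_eventually[OF lE ev])
  show ?thesis
  proof (intro exI[of _ A0] allI impI)
    fix e :: real assume "e > 0"
    then have "eventually (\<lambda>p. dist (A (fst p) (snd p)) A0 < e) ?F" using lA tendstoD by blast
    then obtain Pf Pg where P: "eventually Pf (at 0)" "eventually Pg (at 0)"
      "\<forall>x y. Pf x \<longrightarrow> Pg y \<longrightarrow> dist (A x y) A0 < e"
      unfolding eventually_prod_filter by auto
    obtain d1 where d1: "d1 > 0" "\<forall>x. x \<noteq> 0 \<and> dist x 0 < d1 \<longrightarrow> Pf x"
      using P(1) unfolding eventually_at by auto
    obtain d2 where d2: "d2 > 0" "\<forall>x. x \<noteq> 0 \<and> dist x 0 < d2 \<longrightarrow> Pg x"
      using P(2) unfolding eventually_at by auto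
    show "\<exists>\<delta>>0. \<forall>h k. h \<noteq> 0 \<longrightarrow> k \<noteq> 0 \<longrightarrow> cmod h < \<delta> \<longrightarrow> cmod k < \<delta> \<longrightarrow> cmod (A h k - A0) < e"
    proof (intro exI[of _ "min d1 d2"] conjI allI impI)
      fix h k :: complex assume "h \<noteq> 0" "k \<noteq> 0" "cmod h < min d1 d2" "cmod k < min d1 d2"
      then have "Pf h" "Pg k" using d1 d2 by (auto simp: dist_norm)
      then show "cmod (A h k - A0) < e" using P(3) by (auto simp: dist_norm)
    qed (use d1 d2 in auto)
  qed
qed



lemma DA_holo:
  fixes f :: "complex \<Rightarrow> complex^'n" and \<phi> :: "complex^'n \<Rightarrow> complex"
  assumes phi: "\<phi> \<in> DA_space" and hol: "\<forall>i. (\<lambda>z. f z $ i) holomorphic_on ball 0 1"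
    and into: "f ` ball 0 1 \<subseteq> ball 0 1"
  shows "(\<lambda>z. \<phi> (f z)) holomorphic_on ball 0 1"
proof -
  obtain c :: real where c: "\<And>m (x :: nat \<Rightarrow> complex^'n) a. (\<forall>i<m. x i \<in> ball 0 1) \<Longrightarrow>
     (cmod (\<Sum>i<m. a i * \<phi> (x i)))\<^sup>2 \<le> c * Re (\<Sum>i<m. \<Sum>j<m. a i * cnj (a j) * DA_kernel (x i) (x j))"
    using DA_ineq[OF phi] by blast
  have "\<exists>f'. DERIV (\<lambda>z. \<phi> (f z)) z :> f'" if z: "z \<in> ball 0 1" for z
  proof -
    define r where "r = 1 - cmod z"
    have r0: "r > 0" using z by (simp add: r_def)
    have zr: "z + h \<in> ball 0 1" if "cmod h < r" for h
    proof -
      have "cmod (z + h) \<le> cmod z + cmod h" by (rule norm_triangle_ineq)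
      then show ?thesis using that by (simp add: r_def)
    qed
    define g where "g s = \<phi> (f s)" for s
    define D where "D h = (g (z+h) - g z) / h" for h
    define A where "A = (\<lambda>h k. (DA_kernel (f (z+h)) (f (z+k)) - DA_kernel (f (z+h)) (f z)
                    - DA_kernel (f z) (f (z+k)) + DA_kernel (f z) (f z)) / (h * cnj k))"
    have ineq: "(cmod (D h - D h'))\<^sup>2 \<le> c * Re (A h h - A h h' - A h' h + A h' h')"
      if hh: "h \<noteq> 0" "h' \<noteq> 0" "cmod h < r" "cmod h' < r" for h h'
    proof -
      define a where "a = (\<lambda>i::nat. if i = 0 then 1/h else if i = 1 then -1/h else if i = 2 then -1/h' else 1/h')"
      define p where "p = (\<lambda>i::nat. if i = 0 then z+h else if i = 1 then z else if i = 2 then z+h' else z)"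
      have pin: "\<forall>i<4. f (p i) \<in> ball 0 1"
      proof (intro allI impI)
        fix i :: nat
        have "p i \<in> ball 0 1" unfolding p_def using zr hh z by auto
        then show "f (p i) \<in> ball 0 1" using into by blast
      qed
      have "(cmod (\<Sum>i<4. a i * \<phi> (f (p i))))\<^sup>2 \<le> c * Re (\<Sum>i<4. \<Sum>j<4. a i * cnj (a j) * DA_kernel (f (p i)) (f (p j)))"
        using c[of 4 "\<lambda>i. f (p i)" a] pin by simp
      moreover have "(\<Sum>i<4. a i * \<phi> (f (p i))) = D h - D h'"
        using lin_expand[OF hh(1,2), where z=z and g=g] unfolding a_def p_def D_def g_def by simp
      moreover have "(\<Sum>i<4. \<Sum>j<4. a i * cnj (a j) * DA_kernel (f (p i)) (f (p j))) = A h h - A h h' - A h' h + A h' h'"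
        using quad_expand[OF hh(1,2), where z=z and L="\<lambda>s t. DA_kernel (f s) (f t)"] unfolding a_def p_def A_def by simp
      ultimately show ?thesis by simp
    qed
    obtain A0 where A0: "\<forall>e>0. \<exists>\<delta>>0. \<forall>h k. h \<noteq> 0 \<longrightarrow> k \<noteq> 0 \<longrightarrow> cmod h < \<delta> \<longrightarrow> cmod k < \<delta> \<longrightarrow> cmod (A h k - A0) < e"
      using A_limit[OF hol into z r0 zr] unfolding A_def by blast
    have C: "\<forall>e>0. \<exists>\<delta>>0. \<forall>h h'. h \<noteq> 0 \<longrightarrow> h' \<noteq> 0 \<longrightarrow> cmod h < \<delta> \<longrightarrow> cmod h' < \<delta> \<longrightarrow> cmod (D h - D h') < e"
    proof (intro allI impI)
      fix e :: real assume e: "e > 0"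
      define e1 where "e1 = e\<^sup>2 / (4 * (\<bar>c\<bar> + 1))"
      have e1: "e1 > 0" using e by (simp add: e1_def)
      obtain \<delta> where d: "\<delta> > 0" "\<forall>h k. h \<noteq> 0 \<longrightarrow> k \<noteq> 0 \<longrightarrow> cmod h < \<delta> \<longrightarrow> cmod k < \<delta> \<longrightarrow> cmod (A h k - A0) < e1"
        using A0 e1 by blast
      show "\<exists>\<delta>>0. \<forall>h h'. h \<noteq> 0 \<longrightarrow> h' \<noteq> 0 \<longrightarrow> cmod h < \<delta> \<longrightarrow> cmod h' < \<delta> \<longrightarrow> cmod (D h - D h') < e"
      proof (intro exI[of _ "min \<delta> r"] conjI allI impI)
        fix h h' :: complex assume hh: "h \<noteq> 0" "h' \<noteq> 0" "cmod h < min \<delta> r" "cmod h' < min \<delta> r"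
        let ?Q = "A h h - A h h' - A h' h + A h' h'"
        have q: "?Q = (A h h - A0) - (A h h' - A0) - (A h' h - A0) + (A h' h' - A0)" by simp
        have "cmod ?Q \<le> cmod (A h h - A0) + cmod (A h h' - A0) + cmod (A h' h - A0) + cmod (A h' h' - A0)"
          unfolding q by (rule order_trans[OF norm_triangle_ineq] add_mono order_trans[OF norm_triangle_ineq4] norm_triangle_ineq4 order_refl)+
        also have "\<dots> < 4 * e1"
        proof -
          have "cmod h < \<delta>" "cmod h' < \<delta>" using hh by auto
          then have "cmod (A h h - A0) < e1" "cmod (A h h' - A0) < e1" "cmod (A h' h - A0) < e1" "cmod (A h' h' - A0) < e1"
            using d(2) hh(1,2) by blast+
          then show ?thesis by linarith
        qed
        finally have Q: "cmod ?Q < 4 * e1" .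
        have "c * Re ?Q \<le> \<bar>c\<bar> * cmod ?Q"
        proof -
          have "c * Re ?Q \<le> \<bar>c * Re ?Q\<bar>" by simp
          also have "\<dots> = \<bar>c\<bar> * \<bar>Re ?Q\<bar>" by (simp add: abs_mult)
          also have "\<dots> \<le> \<bar>c\<bar> * cmod ?Q" by (intro mult_left_mono abs_Re_le_cmod) simp
          finally show ?thesis .
        qed
        also have "\<dots> \<le> \<bar>c\<bar> * (4 * e1)" using Q by (intro mult_left_mono) auto
        also have "\<dots> < e\<^sup>2"
        proof -
          have "\<bar>c\<bar> * (4 * e1) = e\<^sup>2 * (\<bar>c\<bar> / (\<bar>c\<bar> + 1))" unfolding e1_def
            by (simp add: field_simps)
          also have "\<dots> < e\<^sup>2 * 1" using e by (intro mult_strict_left_mono) auto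
          finally show ?thesis by simp
        qed
        finally have "(cmod (D h - D h'))\<^sup>2 < e\<^sup>2" using ineq[of h h'] hh by force
        then show "cmod (D h - D h') < e" using e by (simp add: power_less_imp_less_base)
      qed (use d r0 in auto)
    qed
    obtain l where l: "(D \<longlongrightarrow> l) (at 0)" using cauchy_at0[OF C] by blast
    then have "DERIV g z :> l" unfolding DERIV_def D_def .
    then show ?thesis unfolding g_def by blast
  qed
  then show ?thesis by (simp add: holomorphic_on_open)
qed



theorem lemma2p5:
  fixes V :: "(complex^'n) set"
  assumes "analytic_disc_attached V"
  shows "\<forall>p \<epsilon>. regular_point V p \<and> \<epsilon> > 0 \<longrightarrow>
           zero_set {\<phi> \<in> DA_mult. \<forall>w \<in> V \<inter> ball p \<epsilon>. \<phi> w = 0} = V"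
proof (intro allI impI)
  fix p :: "complex^'n" and \<epsilon> :: real
  assume pe: "regular_point V p \<and> \<epsilon> > 0"
  have pV: "p \<in> V" and e0: "\<epsilon> > 0" using pe unfolding regular_point_def by auto
  obtain F0 where F0: "F0 \<subseteq> DA_mult" "V = zero_set F0"
    using assms unfolding analytic_disc_attached_def variety_def by blast
  obtain f :: "complex \<Rightarrow> complex^'n" where into: "f ` ball 0 1 \<subseteq> ball 0 1"
    and hol: "\<forall>i. (\<lambda>z. f z $ i) holomorphic_on ball 0 1" and Vf: "V = f ` ball 0 1"
    using assms unfolding analytic_disc_attached_def by blast
  let ?S = "{\<phi> \<in> DA_mult. \<forall>w \<in> V \<inter> ball p \<epsilon>. \<phi> w = 0}"
  show "zero_set ?S = V"
  proof
    have "F0 \<subseteq> ?S" using F0 unfolding zero_set_def by blast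
    then show "zero_set ?S \<subseteq> V" using F0(2) unfolding zero_set_def by blast
  next
    show "V \<subseteq> zero_set ?S"
    proof
      fix v assume "v \<in> V"
      then obtain w where w: "w \<in> ball 0 1" "v = f w" using Vf by blast
      have vb: "v \<in> ball 0 1" using w into by blast
      obtain s0 where s0: "s0 \<in> ball 0 1" "p = f s0" using pV Vf by blast
      have contf: "continuous_on (ball 0 1) f"
      proof -
        have "continuous_on (ball 0 1) (\<lambda>x. \<chi> i. f x $ i)"
          by (rule continuous_on_vec_lambda) (use hol holomorphic_on_imp_continuous_on in blast)
        then show ?thesis by simp
      qed
      obtain \<rho> where rho: "\<rho> > 0" "\<forall>s\<in>ball 0 1. dist s s0 < \<rho> \<longrightarrow> dist (f s) (f s0) < \<epsilon>"
        using contf s0(1) e0 unfolding continuous_on_iff by blast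
      define \<rho>' where "\<rho>' = min \<rho> (1 - cmod s0)"
      have rho': "\<rho>' > 0" using rho s0 by (simp add: \<rho>'_def)
      have Usub: "ball s0 \<rho>' \<subseteq> ball 0 1"
      proof
        fix s assume "s \<in> ball s0 \<rho>'"
        then have "cmod (s - s0) < 1 - cmod s0" by (simp add: \<rho>'_def dist_norm norm_minus_commute)
        moreover have "cmod s \<le> cmod s0 + cmod (s - s0)" using norm_triangle_ineq[of s0 "s - s0"] by simp
        ultimately show "s \<in> ball 0 1" by simp
      qed
      show "v \<in> zero_set ?S"
        unfolding zero_set_def
      proof (intro CollectI conjI ballI)
        show "v \<in> ball 0 1" by (rule vb)
        fix \<phi> assume phi: "\<phi> \<in> ?S"
        have holg: "(\<lambda>z. \<phi> (f z)) holomorphic_on ball 0 1"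
          by (rule DA_holo[OF mult_DA_space hol into]) (use phi in blast)
        have U0: "\<phi> (f s) = 0" if "s \<in> ball s0 \<rho>'" for s
        proof -
          have sb: "s \<in> ball 0 1" using that Usub by blast
          have "dist s s0 < \<rho>" using that by (simp add: \<rho>'_def dist_commute)
          then have "dist (f s) p < \<epsilon>" using rho(2) sb s0(2) by blast
          then have "f s \<in> V \<inter> ball p \<epsilon>" using sb Vf by (auto simp: dist_commute)
          then show ?thesis using phi by blast
        qed
        have "\<phi> (f w) = 0"
          by (rule analytic_continuation[OF holg open_ball convex_connected[OF convex_ball] Usub s0(1) _ U0 w(1)])
             (use rho' in \<open>simp add: islimpt_ball\<close>)
        then show "\<phi> v = 0" using w by simp
      qed
    qed
  qed
qed

end
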